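(* Consider the Harmonia state machine defined in the context below, with parameters a finite set $D$ of data items, an integer $N\ge 1$ (number of switches), a finite nonempty set $\mathit{Rep}$ of replicas, and a Boolean $\mathit{isReadBehind}$. Then in every state reachable from the initial state by a finite sequence of the actions listed below (with arbitrary choice of action and arguments at each step), the following invariant $\mathit{Linearizability}$ holds: for every message $m\in\mathit{messages}$ with $m.\mathit{mtype}=\mathrm{ReadResponse}$, (i) $m.\mathit{write}\succeq m.\mathit{ghost}$, and (ii) either $m.\mathit{write}=\bot$ or $m.\mathit{write}$ is an entry of $\mathit{CommittedLog}$. (Informally: Harmonia preserves linearizability of the underlying primary-backup/read-ahead or quorum/read-behind replication protocol, including across switch failovers.)
   Context: Harmonia is a replicated-storage scheme in which a network switch tracks a "dirty set" of objects with pending writes and routes reads of clean objects to a single replica. It is modeled as the following state machine. Writes. A write is a record $w=(\mathrm{Write}, \mathit{switchNum}, \mathit{seq}, \mathit{dataItem})$ with $\mathit{switchNum}\in\{1,\dots,N\}$, $\mathit{seq}\in\mathbb{N}_{\ge1}$, $\mathit{dataItem}\in D$. The special value $\bot$ has $\mathit{switchNum}=0,\ \mathit{seq}=0$ and no data item. Define $w_1\succeq w_2$ iff $w_1.\mathit{switchNum}>w_2.\mathit{switchNum}$, or $w_1.\mathit{switchNum}=w_2.\mathit{switchNum}$ and $w_1.\mathit{seq}\ge w_2.\mathit{seq}$; and $w_1\succ w_2$ iff $w_1.\mathit{switchNum}>w_2.\mathit{switchNum}$, or they are equal and $w_1.\mathit{seq}>w_2.\mathit{seq}$. For a finite nonempty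 set $W$ of writes (possibly including $\bot$), $\max W$ denotes an element $w\in W$ with $w\succeq w'$ for all $w'\in W$ (selected by a fixed deterministic choice function). State variables: $\mathit{messages}$ (a set of messages, initially empty); for each switch $s\in\{1,\dots,N\}$ a record $\mathit{sw}[s]$ with fields $\mathit{seq}\in\mathbb{N}$ (initially $0$), $\mathit{dirty}$ a finite partial function $D\rightharpoonup\mathbb{N}$ (initially empty domain), $\mathit{lastCommitted}$ a write or $\bot$ (initially $\bot$); $\mathit{active}\in\{1,\dots,N\}$ (initially $1$); $\mathit{log}$ a finite sequence of writes (initially empty); $\mathit{cp}:\mathit{Rep}\to\mathbb{N}$ (initially all $0$). Derived quantities: $\mathit{CommittedLog}=\mathit{log}$ if $\mathit{isReadBehind}$, and otherwise the prefix of $\mathit{log}$ of length $\min_{r\in\mathit{Rep}}\mathit{cp}[r]$. For a sequence $L$ of writes and $d\in D$, $\mathrm{MCW}(d,L)=\max(\{\bot\}\cup\{e \text{ entry of } L: e.\mathit{dataItem}=d\})$; $\mathrm{MCW}(d)=\mathrm{MCW}(d,\mathit{CommittedLog})$; $\mathrm{MCW}_{all}=\max(\{\bot\}\cup\{\text{entries of }\mathit{CommittedLog}\})$. Actions (each leaves unmentioned variables unchanged): 1. SendWrite$(s,d)$, $s\in\{1..N\}, d\in D$: enabled iff $s\le\mathit{active}$. Let $n=\mathit{sw}[s].\mathit{seq}+1$; set $\mathit{sw}[s].\mathit{seq}:=n$, set $\mathit{sw}[s].\mathit{dirty}(d):=n$ (adding or overriding), add the write $(\mathrm{Write},s,n,d)$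 to $\mathit{messages}$. 2. HandleWrite$(w)$ for a write $w\in\mathit{messages}$: enabled iff $\mathit{log}$ is empty or $w\succeq$ the last entry of $\mathit{log}$; appends $w$ to $\mathit{log}$. 3. ProcessWriteCompletion$(w)$ for $w$ an entry of $\mathit{log}$: enabled iff $\mathrm{MCW}_{all}\succeq w$. With $s=w.\mathit{switchNum}$: restrict $\mathit{sw}[s].\mathit{dirty}$ to those $d$ with $\mathit{sw}[s].\mathit{dirty}(d)>w.\mathit{seq}$, and set $\mathit{sw}[s].\mathit{lastCommitted}:=\max\{\mathit{sw}[s].\mathit{lastCommitted},w\}$. 4. CommitWrite$(r)$, $r\in\mathit{Rep}$: enabled iff $|\mathit{log}|>\mathit{cp}[r]$; sets $\mathit{cp}[r]:=\mathit{cp}[r]+1$. 5. SendRead$(s,d)$: let $\mathit{lr}=\max(\{\mathrm{MCW}(d)\}\cup\{m.\mathit{write}: m\in\mathit{messages},\ m.\mathit{mtype}=\mathrm{ReadResponse},\ m.\mathit{write}\ne\bot,\ m.\mathit{write}.\mathit{dataItem}=d\})$. If $d\notin\mathrm{dom}(\mathit{sw}[s].\mathit{dirty})$ and $\mathit{sw}[s].\mathit{lastCommitted}\succ\bot$, add message $(\mathrm{HarmoniaRead}, \mathit{dataItem}=d, \mathit{switchNum}=s, \mathit{lastCommitted}=\mathit{sw}[s].\mathit{lastCommitted}, \mathit{ghost}=\mathit{lr})$; otherwise add $(\mathrm{ProtocolRead},\mathit{dataItem}=d,\mathit{ghost}=\mathit{lr})$. 6. HandleProtocolRead$(m)$ for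 a ProtocolRead $m\in\mathit{messages}$: add $(\mathrm{ReadResponse}, \mathit{write}=\mathrm{MCW}(m.\mathit{dataItem}), \mathit{ghost}=m.\mathit{ghost})$. 7. HandleHarmoniaRead$(r,m)$ for $r\in\mathit{Rep}$ and a HarmoniaRead $m\in\mathit{messages}$: let $c=\mathit{cp}[r]$ and $w=\mathrm{MCW}(m.\mathit{dataItem}, \text{first } c \text{ entries of } \mathit{log})$. Enabled iff $m.\mathit{switchNum}=\mathit{active}$ and: if $\mathit{isReadBehind}$, then $(\mathit{log}[c]$ if $c>0$, else $\bot)\succeq m.\mathit{lastCommitted}$; if not $\mathit{isReadBehind}$ (read-ahead), then $m.\mathit{lastCommitted}\succeq w$. Adds $(\mathrm{ReadResponse},\mathit{write}=w,\mathit{ghost}=m.\mathit{ghost})$. 8. SwitchFailover: enabled iff $\mathit{active}<N$; sets $\mathit{active}:=\mathit{active}+1$. *)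

theory Defs
  imports Main
begin

datatype 'd wr = Bot | Wr nat nat 'd

fun switchNum :: "'d wr \<Rightarrow> nat" where
  "switchNum Bot = 0"
| "switchNum (Wr s n d) = s"

fun wseq :: "'d wr \<Rightarrow> nat" where
  "wseq Bot = 0"
| "wseq (Wr s n d) = n"

fun wdata :: "'d wr \<Rightarrow> 'd option" where
  "wdata Bot = None"
| "wdata (Wr s n d) = Some d"

definition wge :: "'d wr \<Rightarrow> 'd wr \<Rightarrow> bool" where
  "wge w1 w2 \<longleftrightarrow> switchNum w1 > switchNum w2
     \<or> (switchNum w1 = switchNum w2 \<and> wseq w1 \<ge> wseq w2)"

definition wgt :: "'d wr \<Rightarrow> 'd wr \<Rightarrow> bool" where
  "wgt w1 w2 \<longleftrightarrow> switchNum w1 > switchNum w2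
     \<or> (switchNum w1 = switchNum w2 \<and> wseq w1 > wseq w2)"

definition is_max_choice :: "('d wr set \<Rightarrow> 'd wr) \<Rightarrow> bool" where
  "is_max_choice mx \<longleftrightarrow>
     (\<forall>W. finite W \<and> W \<noteq> {} \<longrightarrow> mx W \<in> W \<and> (\<forall>w\<in>W. wge (mx W) w))"

datatype 'd msg =
    MWrite nat nat 'd
  | HarmoniaRead 'd nat "'d wr" "'d wr" \<comment> \<open>dataItem, switchNum, lastCommitted, ghost\<close>
  | ProtocolRead 'd "'d wr"                \<comment> \<open>dataItem, ghost\<close>
  | ReadResponse "'d wr" "'d wr"        \<comment> \<open>write, ghost\<close>

record 'd swstate =
  sseq :: nat
  dirty :: "'d \<rightharpoonup> nat"
  lastCommitted :: "'d wr"

record ('d, 'r) hstate =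
  messages :: "'d msg set"
  sw :: "nat \<Rightarrow> 'd swstate"
  active :: nat
  hlog :: "'d wr list"
  cp :: "'r \<Rightarrow> nat"

definition init_state :: "('d, 'r) hstate" where
  "init_state = \<lparr> messages = {},
                  sw = (\<lambda>_. \<lparr> sseq = 0, dirty = Map.empty, lastCommitted = Bot \<rparr>),
                  active = 1, hlog = [], cp = (\<lambda>_. 0) \<rparr>"

definition CommittedLog :: "'r set \<Rightarrow> bool \<Rightarrow> ('d, 'r) hstate \<Rightarrow> 'd wr list" where
  "CommittedLog Rep isReadBehind st =
     (if isReadBehind then hlog st else take (Min (cp st ` Rep)) (hlog st))"

definition MCWL :: "('d wr set \<Rightarrow> 'd wr) \<Rightarrow> 'd \<Rightarrow> 'd wr list \<Rightarrow> 'd wr" where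
  "MCWL mx d L = mx ({Bot} \<union> {e. e \<in> set L \<and> wdata e = Some d})"

definition MCW :: "('d wr set \<Rightarrow> 'd wr) \<Rightarrow> 'r set \<Rightarrow> bool \<Rightarrow> ('d, 'r) hstate \<Rightarrow> 'd \<Rightarrow> 'd wr" where
  "MCW mx Rep isReadBehind st d = MCWL mx d (CommittedLog Rep isReadBehind st)"

definition MCW_all :: "('d wr set \<Rightarrow> 'd wr) \<Rightarrow> 'r set \<Rightarrow> bool \<Rightarrow> ('d, 'r) hstate \<Rightarrow> 'd wr" where
  "MCW_all mx Rep isReadBehind st = mx ({Bot} \<union> set (CommittedLog Rep isReadBehind st))"

inductive step :: "'d set \<Rightarrow> nat \<Rightarrow> 'r set \<Rightarrow> bool \<Rightarrow> ('d wr set \<Rightarrow> 'd wr)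
                    \<Rightarrow> ('d, 'r) hstate \<Rightarrow> ('d, 'r) hstate \<Rightarrow> bool"
  for D N Rep isReadBehind mx where
  SendWrite:
  "\<lbrakk> s \<in> {1..N}; d \<in> D; s \<le> active st; n = sseq (sw st s) + 1 \<rbrakk> \<Longrightarrow>
   step D N Rep isReadBehind mx st
     (st\<lparr> sw := (sw st)(s := (sw st s)\<lparr> sseq := n, dirty := (dirty (sw st s))(d \<mapsto> n) \<rparr>),
          messages := insert (MWrite s n d) (messages st) \<rparr>)"
| HandleWrite:
  "\<lbrakk> MWrite s n d \<in> messages st; hlog st = [] \<or> wge (Wr s n d) (last (hlog st)) \<rbrakk> \<Longrightarrow>
   step D N Rep isReadBehind mx st (st\<lparr> hlog := hlog st @ [Wr s n d] \<rparr>)"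
| ProcessWriteCompletion:
  "\<lbrakk> w \<in> set (hlog st); wge (MCW_all mx Rep isReadBehind st) w; s = switchNum w \<rbrakk> \<Longrightarrow>
   step D N Rep isReadBehind mx st
     (st\<lparr> sw := (sw st)(s := (sw st s)\<lparr>
            dirty := (\<lambda>d. case dirty (sw st s) d of
                             None \<Rightarrow> None
                           | Some k \<Rightarrow> (if k > wseq w then Some k else None)),
            lastCommitted := mx {lastCommitted (sw st s), w} \<rparr>) \<rparr>)"
| CommitWrite:
  "\<lbrakk> r \<in> Rep; length (hlog st) > cp st r \<rbrakk> \<Longrightarrow>
   step D N Rep isReadBehind mx st (st\<lparr> cp := (cp st)(r := cp st r + 1) \<rparr>)"
| SendRead:
  "\<lbrakk> s \<in> {1..N}; d \<in> D;
     lr = mx ({MCW mx Rep isReadBehind st d} \<union>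
              {w. \<exists>g. ReadResponse w g \<in> messages st \<and> w \<noteq> Bot \<and> wdata w = Some d});
     m = (if d \<notin> dom (dirty (sw st s)) \<and> wgt (lastCommitted (sw st s)) Bot
          then HarmoniaRead d s (lastCommitted (sw st s)) lr
          else ProtocolRead d lr) \<rbrakk> \<Longrightarrow>
   step D N Rep isReadBehind mx st (st\<lparr> messages := insert m (messages st) \<rparr>)"
| HandleProtocolRead:
  "ProtocolRead d g \<in> messages st \<Longrightarrow>
   step D N Rep isReadBehind mx st
     (st\<lparr> messages := insert (ReadResponse (MCW mx Rep isReadBehind st d) g) (messages st) \<rparr>)"
| HandleHarmoniaRead:
  "\<lbrakk> r \<in> Rep; HarmoniaRead d s lc g \<in> messages st; c = cp st r;
     w = MCWL mx d (take c (hlog st)); s = active st;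
     if isReadBehind then wge (if c > 0 then hlog st ! (c - 1) else Bot) lc
     else wge lc w \<rbrakk> \<Longrightarrow>
   step D N Rep isReadBehind mx st
     (st\<lparr> messages := insert (ReadResponse w g) (messages st) \<rparr>)"
| SwitchFailover:
  "active st < N \<Longrightarrow>
   step D N Rep isReadBehind mx st (st\<lparr> active := active st + 1 \<rparr>)"

inductive reachable :: "'d set \<Rightarrow> nat \<Rightarrow> 'r set \<Rightarrow> bool \<Rightarrow> ('d wr set \<Rightarrow> 'd wr)
                         \<Rightarrow> ('d, 'r) hstate \<Rightarrow> bool"
  for D N Rep isReadBehind mx where
  init: "reachable D N Rep isReadBehind mx init_state"
| stepI: "\<lbrakk> reachable D N Rep isReadBehind mx st; step D N Rep isReadBehind mx st st' \<rbrakk> \<Longrightarrow>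
          reachable D N Rep isReadBehind mx st'"

definition Linearizability :: "'r set \<Rightarrow> bool \<Rightarrow> ('d, 'r) hstate \<Rightarrow> bool" where
  "Linearizability Rep isReadBehind st \<longleftrightarrow>
     (\<forall>w g. ReadResponse w g \<in> messages st \<longrightarrow>
        wge w g \<and> (w = Bot \<or> w \<in> set (CommittedLog Rep isReadBehind st)))"

end

theory Submission
  imports Defs
begin

lemma wge_refl[simp]: "wge a a" by (simp add: wge_def)
lemma wge_trans: "wge a b \<Longrightarrow> wge b c \<Longrightarrow> wge a c" by (auto simp: wge_def)
lemma wge_total: "wge a b \<or> wge b a" by (auto simp: wge_def)
lemma wgt_wge: "wgt a b \<Longrightarrow> wge a b" by (auto simp: wge_def wgt_def)
lemma wge_Bot[simp]: "wge w Bot" by (cases w) (auto simp: wge_def)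
lemma wge_Bot_Wr: "wge Bot (Wr s n d) \<Longrightarrow> s = 0" by (auto simp: wge_def)

lemma mx_props:
  assumes "is_max_choice mx" "finite W" "W \<noteq> {}"
  shows "mx W \<in> W" "w \<in> W \<Longrightarrow> wge (mx W) w"
  using assms by (auto simp: is_max_choice_def)

lemma MCWL_in:
  assumes "is_max_choice mx"
  shows "MCWL mx d L = Bot \<or> (MCWL mx d L \<in> set L \<and> wdata (MCWL mx d L) = Some d)"
proof -
  have "finite ({Bot} \<union> {e. e \<in> set L \<and> wdata e = Some d})" by auto
  from mx_props(1)[OF assms this] show ?thesis unfolding MCWL_def by auto
qed

lemma MCWL_ge:
  assumes "is_max_choice mx" "e \<in> set L" "wdata e = Some d"
  shows "wge (MCWL mx d L) e"
proof -
  have "finite ({Bot} \<union> {e. e \<in> set L \<and> wdata e = Some d})" by auto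
  from mx_props(2)[OF assms(1) this] assms show ?thesis unfolding MCWL_def by auto
qed

lemma key:
  assumes srt: "sorted_wrt (\<lambda>a b. wge b a) L"
    and uq: "\<forall>a\<in>set L. \<forall>b\<in>set L. wge a b \<longrightarrow> wge b a \<longrightarrow> a = b"
    and "j < k" "k \<le> length L" "w \<in> set L" "wge (L!j) w"
  shows "w \<in> set (take k L)"
proof -
  obtain i where i: "i < length L" "L!i = w" using assms(5) by (auto simp: in_set_conv_nth)
  show ?thesis
  proof (cases "i < k")
    case True then show ?thesis using i by (auto simp: in_set_conv_nth)
  next
    case False
    then have "j < i" using assms by auto
    then have "wge (L!i) (L!j)" using sorted_wrt_nth_less[OF srt] i by auto
    moreover have "j < length L" using assms by auto
    ultimately have "L!j = w" using uq assms(6) i by (meson nth_mem)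
    moreover have "j < length (take k L)" using assms by auto
    moreover have "take k L ! j = L ! j" using assms by auto
    ultimately show ?thesis by (metis nth_mem)
  qed
qed

lemma wge_antisym: "wge a b \<Longrightarrow> wge b a \<Longrightarrow> switchNum a = switchNum b \<and> wseq a = wseq b"
  by (auto simp: wge_def)

locale H =
  fixes Rep :: "'r set" and rb :: bool and mx :: "'d wr set \<Rightarrow> 'd wr"
  assumes finRep: "finite Rep" and neRep: "Rep \<noteq> {}" and mxc: "is_max_choice mx"
begin

abbreviation CL :: "('d,'r) hstate \<Rightarrow> 'd wr list" where
  "CL st \<equiv> CommittedLog Rep rb st"

definition ck :: "('d,'r) hstate \<Rightarrow> nat" where
  "ck st = (if rb then length (hlog st) else Min (cp st ` Rep))"

lemma CL_take: "CL st = take (ck st) (hlog st)"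
  by (simp add: CommittedLog_def ck_def)

lemma CL_cong: "hlog st' = hlog st \<Longrightarrow> cp st' = cp st \<Longrightarrow> CL st' = CL st"
  by (simp add: CommittedLog_def)

lemma ck_le_cp: "r \<in> Rep \<Longrightarrow> \<not> rb \<Longrightarrow> ck st \<le> cp st r"
  unfolding ck_def using finRep by simp

lemma ck_le_len: "\<forall>r. cp st r \<le> length (hlog st) \<Longrightarrow> ck st \<le> length (hlog st)"
proof -
  assume a: "\<forall>r. cp st r \<le> length (hlog st)"
  obtain r where "r \<in> Rep" using neRep by auto
  then show ?thesis using a ck_le_cp[of r st] unfolding ck_def by (cases rb) (auto intro: le_trans)
qed

definition gok :: "('d,'r) hstate \<Rightarrow> 'd \<Rightarrow> 'd wr \<Rightarrow> bool" where
  "gok st d g \<longleftrightarrow> g = Bot \<or> (g \<in> set (CL st) \<and> wdata g = Some d)"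

definition Inv :: "('d,'r) hstate \<Rightarrow> bool" where
  "Inv st \<longleftrightarrow>
   finite (messages st) \<and>
   sorted_wrt (\<lambda>a b. wge b a) (hlog st) \<and>
   (\<forall>r. cp st r \<le> length (hlog st)) \<and>
   (\<forall>w\<in>set (hlog st). \<exists>s n d. w = Wr s n d \<and> MWrite s n d \<in> messages st) \<and>
   (\<forall>s n d. MWrite s n d \<in> messages st \<longrightarrow> 1 \<le> s \<and> s \<le> active st \<and> n \<le> sseq (sw st s) \<and>
       ((\<exists>k. dirty (sw st s) d = Some k \<and> n \<le> k) \<or> wge (lastCommitted (sw st s)) (Wr s n d))) \<and>
   (\<forall>s n d d'. MWrite s n d \<in> messages st \<longrightarrow> MWrite s n d' \<in> messages st \<longrightarrow> d = d') \<and>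
   (\<forall>s. lastCommitted (sw st s) = Bot \<or>
        (lastCommitted (sw st s) \<in> set (CL st) \<and> switchNum (lastCommitted (sw st s)) = s)) \<and>
   (\<forall>w g. ReadResponse w g \<in> messages st \<longrightarrow> wge w g \<and> (w = Bot \<or> w \<in> set (CL st))) \<and>
   (\<forall>d g. ProtocolRead d g \<in> messages st \<longrightarrow> gok st d g) \<and>
   (\<forall>d s lc g. HarmoniaRead d s lc g \<in> messages st \<longrightarrow> gok st d g \<and> lc \<in> set (CL st) \<and>
        wgt lc Bot \<and> switchNum lc = s \<and> (g = Bot \<or> wge lc g \<or> s < active st))"

lemma InvD:
  assumes "Inv st"
  shows "finite (messages st)" "sorted_wrt (\<lambda>a b. wge b a) (hlog st)"
   "cp st r \<le> length (hlog st)"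
   "w\<in>set (hlog st) \<Longrightarrow> \<exists>s n d. w = Wr s n d \<and> MWrite s n d \<in> messages st"
   "MWrite s n d \<in> messages st \<Longrightarrow> 1 \<le> s \<and> s \<le> active st \<and> n \<le> sseq (sw st s) \<and>
       ((\<exists>k. dirty (sw st s) d = Some k \<and> n \<le> k) \<or> wge (lastCommitted (sw st s)) (Wr s n d))"
   "MWrite s n d \<in> messages st \<Longrightarrow> MWrite s n d' \<in> messages st \<Longrightarrow> d = d'"
   "lastCommitted (sw st s) = Bot \<or>
        (lastCommitted (sw st s) \<in> set (CL st) \<and> switchNum (lastCommitted (sw st s)) = s)"
   "ReadResponse w g \<in> messages st \<Longrightarrow> wge w g \<and> (w = Bot \<or> w \<in> set (CL st))"
   "ProtocolRead d g \<in> messages st \<Longrightarrow> gok st d g"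
   "HarmoniaRead d s lc g \<in> messages st \<Longrightarrow> gok st d g \<and> lc \<in> set (CL st) \<and>
        wgt lc Bot \<and> switchNum lc = s \<and> (g = Bot \<or> wge lc g \<or> s < active st)"
  using assms unfolding Inv_def by blast+

lemma Inv_init: "Inv init_state"
  by (simp add: Inv_def init_state_def CommittedLog_def gok_def)

lemma uniq_log:
  assumes "Inv st" shows "\<forall>a\<in>set (hlog st). \<forall>b\<in>set (hlog st). wge a b \<longrightarrow> wge b a \<longrightarrow> a = b"
proof (intro ballI impI)
  fix a b assume ab: "a \<in> set (hlog st)" "b \<in> set (hlog st)" "wge a b" "wge b a"
  from assms ab obtain s n d s' n' d' where "a = Wr s n d" "MWrite s n d \<in> messages st"
     "b = Wr s' n' d'" "MWrite s' n' d' \<in> messages st" unfolding Inv_def by meson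
  with wge_antisym[OF ab(3,4)] assms show "a = b" unfolding Inv_def by auto
qed

lemma key_CL:
  assumes "Inv st" "e \<in> set (CL st)" "w \<in> set (hlog st)" "wge e w"
  shows "w \<in> set (CL st)"
proof -
  have le: "ck st \<le> length (hlog st)" using assms(1) ck_le_len unfolding Inv_def by blast
  obtain j where j: "j < ck st" "j < length (hlog st)" "hlog st ! j = e"
    using assms(2) unfolding CL_take by (auto simp: in_set_conv_nth)
  show ?thesis unfolding CL_take
    by (rule key[OF _ uniq_log[OF assms(1)] j(1) le assms(3)]) (use assms(1) j assms(4) in \<open>auto simp: Inv_def\<close>)
qed

lemma pres_SendWrite:
  assumes I: "Inv st" and s: "s \<in> {1..N}" "s \<le> active st" and n: "n = sseq (sw st s) + 1"
    and st': "st' = st\<lparr> sw := (sw st)(s := (sw st s)\<lparr> sseq := n, dirty := (dirty (sw st s))(d \<mapsto> n) \<rparr>),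
          messages := insert (MWrite s n d) (messages st) \<rparr>"
  shows "Inv st'"
proof -
  have cl: "CL st' = CL st" by (rule CL_cong) (simp_all add: st')
  have lc: "lastCommitted (sw st' x) = lastCommitted (sw st x)" for x by (simp add: st')
  have old: "MWrite s n' d' \<in> messages st \<Longrightarrow> n' < n" for n' d' using I n unfolding Inv_def by fastforce
  show ?thesis unfolding Inv_def gok_def cl lc
  proof (intro conjI allI impI ballI)
    show "finite (messages st')" using I by (simp add: st' Inv_def)
    show "sorted_wrt (\<lambda>a b. wge b a) (hlog st')" using I by (simp add: st' Inv_def)
    show "cp st' r \<le> length (hlog st')" for r using I by (simp add: st' Inv_def)
    show "\<exists>s n d. w = Wr s n d \<and> MWrite s n d \<in> messages st'" if "w \<in> set (hlog st')" for w
      using I that by (auto simp: st' Inv_def)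
    fix s2 n2 d2 assume m: "MWrite s2 n2 d2 \<in> messages st'"
    show "1 \<le> s2" "s2 \<le> active st'" "n2 \<le> sseq (sw st' s2)"
      using m I s n old by (auto simp: st' Inv_def split: if_splits dest: old)
    show "(\<exists>k. dirty (sw st' s2) d2 = Some k \<and> n2 \<le> k) \<or> wge (lastCommitted (sw st s2)) (Wr s2 n2 d2)"
    proof (cases "s2 = s")
      case True
      show ?thesis
      proof (cases "d2 = d")
        case True with \<open>s2 = s\<close> m old show ?thesis by (auto simp: st' less_imp_le)
      next
        case False with \<open>s2 = s\<close> m I show ?thesis by (auto simp: st' Inv_def)
      qed
    next
      case False with m I show ?thesis by (auto simp: st' Inv_def)
    qed
  next
    fix s2 n2 d2 d3 assume "MWrite s2 n2 d2 \<in> messages st'" "MWrite s2 n2 d3 \<in> messages st'"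
    then show "d2 = d3" using I old by (auto simp: st' Inv_def)
  next
    fix x show "lastCommitted (sw st x) = Bot \<or> lastCommitted (sw st x) \<in> set (CL st) \<and> switchNum (lastCommitted (sw st x)) = x"
      using I by (simp add: Inv_def)
  next
    fix w g assume "ReadResponse w g \<in> messages st'"
    then show "wge w g" "w = Bot \<or> w \<in> set (CL st)" using I by (auto simp: st' Inv_def)
  next
    fix d2 g assume "ProtocolRead d2 g \<in> messages st'"
    then show "g = Bot \<or> g \<in> set (CL st) \<and> wdata g = Some d2" using I by (auto simp: st' Inv_def gok_def)
  next
    fix d2 s2 lc g assume "HarmoniaRead d2 s2 lc g \<in> messages st'"
    then have h: "HarmoniaRead d2 s2 lc g \<in> messages st" by (simp add: st')
    show "g = Bot \<or> g \<in> set (CL st) \<and> wdata g = Some d2" "lc \<in> set (CL st)" "wgt lc Bot" "switchNum lc = s2"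
      "g = Bot \<or> wge lc g \<or> s2 < active st'"
      using I h by (auto simp: st' Inv_def gok_def)
  qed
qed

lemma gok_mono: "set (CL st) \<subseteq> set (CL st') \<Longrightarrow> gok st d g \<Longrightarrow> gok st' d g"
  unfolding gok_def by auto

lemma CL_sub_log: "set (CL st) \<subseteq> set (hlog st)"
  unfolding CL_take by (rule set_take_subset)

lemma sorted_last: "sorted_wrt (\<lambda>a b. wge b a) L \<Longrightarrow> x \<in> set L \<Longrightarrow> wge (last L) x"
proof -
  assume s: "sorted_wrt (\<lambda>a b. wge b a) L" and x: "x \<in> set L"
  then have "L \<noteq> []" by auto
  then have L: "L = butlast L @ [last L]" by simp
  have "sorted_wrt (\<lambda>a b. wge b a) (butlast L @ [last L])" using s L by metis
  then have "\<forall>y\<in>set (butlast L). wge (last L) y" by (simp add: sorted_wrt_append)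
  moreover have "x \<in> set (butlast L) \<or> x = last L" using x L by (metis Un_iff empty_iff empty_set set_ConsD set_append)
  ultimately show ?thesis by auto
qed

lemma pres_HandleWrite:
  assumes I: "Inv st" and m: "MWrite s n d \<in> messages st"
    and o: "hlog st = [] \<or> wge (Wr s n d) (last (hlog st))"
    and st': "st' = st\<lparr> hlog := hlog st @ [Wr s n d] \<rparr>"
  shows "Inv st'"
proof -
  have le: "ck st \<le> length (hlog st)" using I ck_le_len unfolding Inv_def by blast
  have sub: "set (CL st) \<subseteq> set (CL st')"
  proof (cases rb)
    case True then show ?thesis unfolding CL_take ck_def by (auto simp: st')
  next
    case False
    then have "ck st' = ck st" unfolding ck_def by (simp add: st')
    then show ?thesis unfolding CL_take using le by (simp add: st')
  qed
  have srt: "sorted_wrt (\<lambda>a b. wge b a) (hlog st)" using I by (simp add: Inv_def)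
  have "\<forall>x\<in>set (hlog st). wge (Wr s n d) x"
    using o sorted_last[OF srt] wge_trans by fastforce
  then have srt': "sorted_wrt (\<lambda>a b. wge b a) (hlog st')" using srt by (simp add: st' sorted_wrt_append)
  show ?thesis unfolding Inv_def
  proof (intro conjI allI impI ballI)
    show "finite (messages st')" using I by (simp add: st' Inv_def)
    show "sorted_wrt (\<lambda>a b. wge b a) (hlog st')" by (rule srt')
    show "cp st' r \<le> length (hlog st')" for r using I by (simp add: st' Inv_def le_SucI)
    show "\<exists>s n d. w = Wr s n d \<and> MWrite s n d \<in> messages st'" if "w \<in> set (hlog st')" for w
      using I that m by (auto simp: st' Inv_def)
    fix s2 n2 d2 assume m2: "MWrite s2 n2 d2 \<in> messages st'"
    show "1 \<le> s2" "s2 \<le> active st'" "n2 \<le> sseq (sw st' s2)"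
       "(\<exists>k. dirty (sw st' s2) d2 = Some k \<and> n2 \<le> k) \<or> wge (lastCommitted (sw st' s2)) (Wr s2 n2 d2)"
      using m2 I by (auto simp: st' Inv_def)
  next
    fix s2 n2 d2 d3 assume "MWrite s2 n2 d2 \<in> messages st'" "MWrite s2 n2 d3 \<in> messages st'"
    then show "d2 = d3" using I by (auto simp: st' Inv_def)
  next
    fix x show "lastCommitted (sw st' x) = Bot \<or> lastCommitted (sw st' x) \<in> set (CL st') \<and> switchNum (lastCommitted (sw st' x)) = x"
      using I sub unfolding Inv_def by (auto simp: st')
  next
    fix w g assume "ReadResponse w g \<in> messages st'"
    then have "ReadResponse w g \<in> messages st" by (simp add: st')
    then show "wge w g" "w = Bot \<or> w \<in> set (CL st')" using I sub unfolding Inv_def by blast+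
  next
    fix d2 g assume "ProtocolRead d2 g \<in> messages st'"
    then have "ProtocolRead d2 g \<in> messages st" by (simp add: st')
    then have "gok st d2 g" using I unfolding Inv_def by blast
    then show "gok st' d2 g" by (rule gok_mono[OF sub])
  next
    fix d2 s2 lc g assume "HarmoniaRead d2 s2 lc g \<in> messages st'"
    then have h: "HarmoniaRead d2 s2 lc g \<in> messages st" by (simp add: st')
    have "gok st d2 g" using I h unfolding Inv_def by blast
    then show "gok st' d2 g" by (rule gok_mono[OF sub])
    show "lc \<in> set (CL st')" using I h sub unfolding Inv_def by blast
    show "wgt lc Bot" "switchNum lc = s2"
      "g = Bot \<or> wge lc g \<or> s2 < active st'"
      using I h unfolding Inv_def by (auto simp: st')
  qed
qed

definition msg_ok :: "('d,'r) hstate \<Rightarrow> 'd msg \<Rightarrow> bool" where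
  "msg_ok st m = (case m of
     ReadResponse w g \<Rightarrow> wge w g \<and> (w = Bot \<or> w \<in> set (CL st))
   | ProtocolRead d g \<Rightarrow> gok st d g
   | HarmoniaRead d s lc g \<Rightarrow> gok st d g \<and> lc \<in> set (CL st) \<and>
        wgt lc Bot \<and> switchNum lc = s \<and> (g = Bot \<or> wge lc g \<or> s < active st)
   | MWrite _ _ _ \<Rightarrow> False)"

lemma pres_newmsg:
  assumes I: "Inv st" and st': "st' = st\<lparr> messages := insert m (messages st) \<rparr>"
    and ok: "msg_ok st m"
  shows "Inv st'"
proof -
  have cl: "CL st' = CL st" by (rule CL_cong) (simp_all add: st')
  have gk: "gok st' = gok st" unfolding gok_def cl by simp
  have nw: "m \<noteq> MWrite s n d" for s n d using ok by (auto simp: msg_ok_def)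
  have M: "x \<in> messages st' \<longleftrightarrow> x = m \<or> x \<in> messages st" for x by (simp add: st')
  show ?thesis unfolding Inv_def cl gk
  proof (intro conjI allI impI ballI)
    show "finite (messages st')" using I by (simp add: st' Inv_def)
    show "sorted_wrt (\<lambda>a b. wge b a) (hlog st')" using I by (simp add: st' Inv_def)
    show "cp st' r \<le> length (hlog st')" for r using I by (simp add: st' Inv_def)
    show "\<exists>s n d. w = Wr s n d \<and> MWrite s n d \<in> messages st'" if "w \<in> set (hlog st')" for w
      using I that by (auto simp: st' Inv_def)
    fix s2 n2 d2 assume "MWrite s2 n2 d2 \<in> messages st'"
    then have m2: "MWrite s2 n2 d2 \<in> messages st" using M[of "MWrite s2 n2 d2"] nw[of s2 n2 d2] by auto
    show "1 \<le> s2" "s2 \<le> active st'" "n2 \<le> sseq (sw st' s2)"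
       "(\<exists>k. dirty (sw st' s2) d2 = Some k \<and> n2 \<le> k) \<or> wge (lastCommitted (sw st' s2)) (Wr s2 n2 d2)"
      using m2 I unfolding Inv_def by (simp_all add: st')
  next
    fix s2 n2 d2 d3 assume "MWrite s2 n2 d2 \<in> messages st'" "MWrite s2 n2 d3 \<in> messages st'"
    then have "MWrite s2 n2 d2 \<in> messages st" "MWrite s2 n2 d3 \<in> messages st" using M[of "MWrite s2 n2 d2"] M[of "MWrite s2 n2 d3"] nw[of s2 n2] by auto
    then show "d2 = d3" using I unfolding Inv_def by blast
  next
    fix x show "lastCommitted (sw st' x) = Bot \<or> lastCommitted (sw st' x) \<in> set (CL st) \<and> switchNum (lastCommitted (sw st' x)) = x"
      using I unfolding Inv_def by (simp add: st')
  next
    fix w g assume "ReadResponse w g \<in> messages st'"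
    then consider "m = ReadResponse w g" | "ReadResponse w g \<in> messages st" using M[of "ReadResponse w g"] by auto
    then show "wge w g" "w = Bot \<or> w \<in> set (CL st)"
      by (cases; use I ok in \<open>auto simp: Inv_def msg_ok_def\<close>)+
  next
    fix d2 g assume "ProtocolRead d2 g \<in> messages st'"
    then consider "m = ProtocolRead d2 g" | "ProtocolRead d2 g \<in> messages st" using M[of "ProtocolRead d2 g"] by auto
    then show "gok st d2 g"
      by (cases; use I ok in \<open>auto simp: Inv_def msg_ok_def\<close>)
  next
    fix d2 s2 lc g assume "HarmoniaRead d2 s2 lc g \<in> messages st'"
    then consider "m = HarmoniaRead d2 s2 lc g" | "HarmoniaRead d2 s2 lc g \<in> messages st" using M[of "HarmoniaRead d2 s2 lc g"] by auto
    then have "gok st d2 g \<and> lc \<in> set (CL st) \<and>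
        wgt lc Bot \<and> switchNum lc = s2 \<and> (g = Bot \<or> wge lc g \<or> s2 < active st)"
    proof cases
      case 1 then show ?thesis using ok by (simp add: msg_ok_def)
    next
      case 2 then show ?thesis using I unfolding Inv_def by blast
    qed
    then show "gok st d2 g" "lc \<in> set (CL st)" "wgt lc Bot" "switchNum lc = s2"
      "g = Bot \<or> wge lc g \<or> s2 < active st'" by (simp_all add: st')
  qed
qed


lemma wgt_Bot_ne: "wgt lc Bot \<Longrightarrow> lc \<noteq> Bot" by (auto simp: wgt_def)

lemma ok_SendRead:
  assumes I: "Inv st"
    and lr: "lr = mx ({MCW mx Rep rb st d} \<union>
              {w. \<exists>g. ReadResponse w g \<in> messages st \<and> w \<noteq> Bot \<and> wdata w = Some d})"
    and m: "m = (if d \<notin> dom (dirty (sw st s)) \<and> wgt (lastCommitted (sw st s)) Bot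
          then HarmoniaRead d s (lastCommitted (sw st s)) lr
          else ProtocolRead d lr)"
  shows "msg_ok st m"
proof -
  define R where "R = {w. \<exists>g. ReadResponse w g \<in> messages st \<and> w \<noteq> Bot \<and> wdata w = Some d}"
  have "R \<subseteq> (\<lambda>x. case x of ReadResponse w g \<Rightarrow> w | _ \<Rightarrow> Bot) ` messages st"
    unfolding R_def by (force simp: image_iff)
  moreover have "finite (messages st)" using I by (simp add: Inv_def)
  ultimately have fR: "finite R" by (meson finite_imageI finite_subset)
  have "lr \<in> {MCW mx Rep rb st d} \<union> R" unfolding lr R_def
    by (rule mx_props(1)[OF mxc]) (use fR in \<open>auto simp: R_def\<close>)
  then have gk: "gok st d lr"
  proof
    assume "lr \<in> {MCW mx Rep rb st d}"
    then show ?thesis using MCWL_in[OF mxc, of d "CL st"] by (auto simp: MCW_def gok_def)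
  next
    assume "lr \<in> R"
    then obtain g where "ReadResponse lr g \<in> messages st" "lr \<noteq> Bot" "wdata lr = Some d"
      unfolding R_def by blast
    then show ?thesis using I unfolding Inv_def gok_def by blast
  qed
  show ?thesis
  proof (cases "d \<notin> dom (dirty (sw st s)) \<and> wgt (lastCommitted (sw st s)) Bot")
    case False
    then have "m = ProtocolRead d lr" using m if_not_P[OF False] by metis
    then show ?thesis using gk by (simp add: msg_ok_def)
  next
    case True
    define lc where "lc = lastCommitted (sw st s)"
    have nd: "dirty (sw st s) d = None" using True by auto
    have lcB: "wgt lc Bot" using True lc_def by simp
    have lcC: "lc \<in> set (CL st) \<and> switchNum lc = s"
      using I wgt_Bot_ne[OF lcB] unfolding Inv_def lc_def by blast
    have last: "lr = Bot \<or> wge lc lr \<or> s < active st"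
    proof (cases "lr = Bot")
      case False
      then have "lr \<in> set (CL st)" "wdata lr = Some d" using gk by (auto simp: gok_def)
      then have "lr \<in> set (hlog st)" using CL_sub_log by blast
      then obtain s' n' d' where e: "lr = Wr s' n' d'" "MWrite s' n' d' \<in> messages st"
        using InvD(4)[OF I] by blast
      have dd: "d' = d" using e \<open>wdata lr = Some d\<close> by simp
      have mi: "1 \<le> s' \<and> s' \<le> active st \<and> n' \<le> sseq (sw st s') \<and>
       ((\<exists>k. dirty (sw st s') d' = Some k \<and> n' \<le> k) \<or> wge (lastCommitted (sw st s')) (Wr s' n' d'))"
        using I e(2) unfolding Inv_def by blast
      consider "s' < s" | "s' = s" | "s < s'" by arith
      then show ?thesis
      proof cases
        case 1 then show ?thesis using lcC e by (simp add: wge_def)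
      next
        case 2 then show ?thesis using mi nd dd e lc_def by auto
      next
        case 3 then show ?thesis using mi by auto
      qed
    qed simp
    show ?thesis using m True gk lcB lcC last by (simp add: msg_ok_def lc_def)
  qed
qed

lemma ok_HandleProtocolRead:
  assumes I: "Inv st" and p: "ProtocolRead d g \<in> messages st"
  shows "msg_ok st (ReadResponse (MCW mx Rep rb st d) g)"
proof -
  have gk: "gok st d g" using I p unfolding Inv_def by blast
  have "wge (MCW mx Rep rb st d) g"
    using gk MCWL_ge[OF mxc] unfolding gok_def MCW_def by auto
  moreover have "MCW mx Rep rb st d = Bot \<or> MCW mx Rep rb st d \<in> set (CL st)"
    using MCWL_in[OF mxc, of d "CL st"] unfolding MCW_def by auto
  ultimately show ?thesis by (simp add: msg_ok_def)
qed

lemma ok_HandleHarmoniaRead: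
  assumes I: "Inv st" and r: "r \<in> Rep" and h: "HarmoniaRead d s lc g \<in> messages st"
    and c: "c = cp st r" and w: "w = MCWL mx d (take c (hlog st))" and s: "s = active st"
    and cond: "if rb then wge (if c > 0 then hlog st ! (c - 1) else Bot) lc else wge lc w"
  shows "msg_ok st (ReadResponse w g)"
proof -
  have hm: "gok st d g \<and> lc \<in> set (CL st) \<and> wgt lc Bot \<and> switchNum lc = s \<and> (g = Bot \<or> wge lc g \<or> s < active st)"
    using I h unfolding Inv_def by blast
  have cle: "c \<le> length (hlog st)" using I c unfolding Inv_def by blast
  have srt: "sorted_wrt (\<lambda>a b. wge b a) (hlog st)" using I unfolding Inv_def by blast
  have win: "w = Bot \<or> (w \<in> set (take c (hlog st)) \<and> wdata w = Some d)"
    using MCWL_in[OF mxc] w by blast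
  then have wlog: "w = Bot \<or> w \<in> set (hlog st)" by (meson in_set_takeD)
  show ?thesis
  proof (cases rb)
    case True
    then have clog: "CL st = hlog st" by (simp add: CommittedLog_def)
    have ge: "wge w g"
    proof (cases "g = Bot")
      case False
      then have g1: "g \<in> set (hlog st)" "wdata g = Some d" using hm clog by (auto simp: gok_def)
      have lg: "wge lc g" using hm s False by auto
      have "c > 0"
      proof (rule ccontr)
        assume "\<not> c > 0"
        then have "wge Bot lc" using cond True by simp
        then show False using hm by (auto simp: wge_def wgt_def)
      qed
      then have "wge (hlog st ! (c - 1)) lc" using cond True by simp
      then have "wge (hlog st ! (c - 1)) g" using lg wge_trans by blast
      then have "g \<in> set (take c (hlog st))"
        using key[OF srt uniq_log[OF I], of "c - 1" c g] \<open>c > 0\<close> cle g1 by auto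
      then show ?thesis using MCWL_ge[OF mxc _ g1(2)] w by blast
    qed simp
    show ?thesis using ge wlog clog by (simp add: msg_ok_def)
  next
    case False
    have ge: "wge w g"
    proof (cases "g = Bot")
      case False
      then have g1: "g \<in> set (CL st)" "wdata g = Some d" using hm by (auto simp: gok_def)
      have "ck st \<le> c" using ck_le_cp[OF r \<open>\<not> rb\<close>] c by simp
      then have "g \<in> set (take c (hlog st))" using g1 unfolding CL_take
        by (meson set_take_subset_set_take subsetD)
      then show ?thesis using MCWL_ge[OF mxc _ g1(2)] w by blast
    qed simp
    have "w = Bot \<or> w \<in> set (CL st)"
    proof (cases "w = Bot")
      case False
      then have "w \<in> set (hlog st)" using wlog by simp
      moreover have "wge lc w" using cond False \<open>\<not> rb\<close> by simp
      ultimately show ?thesis using key_CL[OF I] hm by blast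
    qed simp
    then show ?thesis using ge by (simp add: msg_ok_def)
  qed
qed


lemma pres_PWC:
  assumes I: "Inv st" and w: "w \<in> set (hlog st)" and ge: "wge (MCW_all mx Rep rb st) w"
    and s: "s = switchNum w"
    and st': "st' = st\<lparr> sw := (sw st)(s := (sw st s)\<lparr>
            dirty := (\<lambda>d. case dirty (sw st s) d of
                             None \<Rightarrow> None
                           | Some k \<Rightarrow> (if k > wseq w then Some k else None)),
            lastCommitted := mx {lastCommitted (sw st s), w} \<rparr>) \<rparr>"
  shows "Inv st'"
proof -
  have cl: "CL st' = CL st" by (rule CL_cong) (simp_all add: st')
  have gk: "gok st' = gok st" unfolding gok_def cl by simp
  obtain s0 n0 d0 where w0: "w = Wr s0 n0 d0" "MWrite s0 n0 d0 \<in> messages st" using InvD(4)[OF I w] by blast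
  have s0: "s0 = s" "1 \<le> s" using s w0 InvD(5)[OF I w0(2)] by auto
  define lco where "lco = lastCommitted (sw st s)"
  define lcn where "lcn = mx {lco, w}"
  have lcn1: "lcn \<in> {lco, w}" "wge lcn lco" "wge lcn w"
    using mx_props[OF mxc, of "{lco, w}"] unfolding lcn_def by auto
  have "mx ({Bot} \<union> set (CL st)) \<in> {Bot} \<union> set (CL st)" by (rule mx_props(1)[OF mxc]) auto
  moreover have "mx ({Bot} \<union> set (CL st)) \<noteq> Bot"
  proof
    assume "mx ({Bot} \<union> set (CL st)) = Bot"
    then have "wge Bot w" using ge by (simp add: MCW_all_def)
    then show False using w0(1) s0 wge_Bot_Wr[of s0 n0 d0] by simp
  qed
  ultimately have "mx ({Bot} \<union> set (CL st)) \<in> set (CL st)" by blast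
  then have wCL: "w \<in> set (CL st)" using key_CL[OF I _ w] ge by (simp add: MCW_all_def)
  have lcnok: "lcn = Bot \<or> (lcn \<in> set (CL st) \<and> switchNum lcn = s)"
    using lcn1(1) InvD(7)[OF I, of s] wCL s unfolding lco_def by auto
  have swx: "sw st' x = (if x = s then (sw st s)\<lparr>
            dirty := (\<lambda>d. case dirty (sw st s) d of
                             None \<Rightarrow> None
                           | Some k \<Rightarrow> (if k > wseq w then Some k else None)),
            lastCommitted := lcn \<rparr> else sw st x)" for x
    by (simp add: st' lcn_def lco_def)
  show ?thesis unfolding Inv_def cl gk
  proof (intro conjI allI impI ballI)
    show "finite (messages st')" using I by (simp add: st' Inv_def)
    show "sorted_wrt (\<lambda>a b. wge b a) (hlog st')" using I by (simp add: st' Inv_def)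
    show "cp st' r \<le> length (hlog st')" for r using I by (simp add: st' Inv_def)
    show "\<exists>s n d. x = Wr s n d \<and> MWrite s n d \<in> messages st'" if "x \<in> set (hlog st')" for x
      using I that by (auto simp: st' Inv_def)
    fix s2 n2 d2 assume "MWrite s2 n2 d2 \<in> messages st'"
    then have m2: "MWrite s2 n2 d2 \<in> messages st" by (simp add: st')
    note mi = InvD(5)[OF I m2]
    show "1 \<le> s2" "s2 \<le> active st'" "n2 \<le> sseq (sw st' s2)"
      using mi by (cases "s2 = s"; simp add: swx st')+
    show "(\<exists>k. dirty (sw st' s2) d2 = Some k \<and> n2 \<le> k) \<or> wge (lastCommitted (sw st' s2)) (Wr s2 n2 d2)"
    proof (cases "s2 = s")
      case False then show ?thesis using mi by (simp add: swx)
    next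
      case True
      have ww: "wge w (Wr s n2 d2)" if "n2 \<le> wseq w" using that s by (simp add: wge_def)
      have lcs: "lastCommitted (sw st' s2) = lcn" using True by (simp add: swx)
      from mi True consider k where "dirty (sw st s) d2 = Some k" "n2 \<le> k" | "wge lco (Wr s n2 d2)"
        unfolding lco_def by blast
      then show ?thesis
      proof cases
        case (1 k)
        show ?thesis
        proof (cases "k > wseq w")
          case True
          then have "dirty (sw st' s2) d2 = Some k" using 1 \<open>s2 = s\<close> by (simp add: swx)
          then show ?thesis using 1 by blast
        next
          case False
          then have "wge w (Wr s n2 d2)" using ww 1 by simp
          then have "wge lcn (Wr s n2 d2)" using lcn1(3) wge_trans by blast
          then show ?thesis using lcs True by simp
        qed
      next
        case 2
        then have "wge lcn (Wr s n2 d2)" using lcn1(2) wge_trans by blast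
        then show ?thesis using lcs True by simp
      qed
    qed
  next
    fix s2 n2 d2 d3 assume "MWrite s2 n2 d2 \<in> messages st'" "MWrite s2 n2 d3 \<in> messages st'"
    then show "d2 = d3" using InvD(6)[OF I] by (simp add: st')
  next
    fix x show "lastCommitted (sw st' x) = Bot \<or> lastCommitted (sw st' x) \<in> set (CL st) \<and> switchNum (lastCommitted (sw st' x)) = x"
      using InvD(7)[OF I, of x] lcnok by (simp add: swx)
  next
    fix w g assume "ReadResponse w g \<in> messages st'"
    then show "wge w g" "w = Bot \<or> w \<in> set (CL st)" using InvD(8)[OF I] by (simp_all add: st')
  next
    fix d2 g assume "ProtocolRead d2 g \<in> messages st'"
    then show "gok st d2 g" using InvD(9)[OF I] by (simp add: st')
  next
    fix d2 s2 lc g assume "HarmoniaRead d2 s2 lc g \<in> messages st'"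
    then have h: "HarmoniaRead d2 s2 lc g \<in> messages st" by (simp add: st')
    show "gok st d2 g" "lc \<in> set (CL st)" "wgt lc Bot" "switchNum lc = s2"
      "g = Bot \<or> wge lc g \<or> s2 < active st'" using InvD(10)[OF I h] by (simp_all add: st')
  qed
qed

lemma pres_Commit:
  assumes I: "Inv st" and r: "r \<in> Rep" and l: "length (hlog st) > cp st r"
    and st': "st' = st\<lparr> cp := (cp st)(r := cp st r + 1) \<rparr>"
  shows "Inv st'"
proof -
  have "ck st \<le> ck st'"
  proof (cases rb)
    case False
    have "Min (cp st ` Rep) \<le> Min (cp st' ` Rep)"
    proof (rule Min.boundedI)
      show "finite (cp st' ` Rep)" "cp st' ` Rep \<noteq> {}" using finRep neRep by auto
      fix a assume "a \<in> cp st' ` Rep"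
      then obtain y where y: "y \<in> Rep" "a = cp st' y" by auto
      have "Min (cp st ` Rep) \<le> cp st y" using finRep y(1) by simp
      also have "\<dots> \<le> a" using y by (simp add: st')
      finally show "Min (cp st ` Rep) \<le> a" .
    qed
    then show ?thesis using False unfolding ck_def by simp
  qed (unfold ck_def, simp add: st')
  then have sub: "set (CL st) \<subseteq> set (CL st')" unfolding CL_take
    by (simp add: st' set_take_subset_set_take)
  show ?thesis unfolding Inv_def
  proof (intro conjI allI impI ballI)
    show "finite (messages st')" using I by (simp add: st' Inv_def)
    show "sorted_wrt (\<lambda>a b. wge b a) (hlog st')" using I by (simp add: st' Inv_def)
    show "cp st' x \<le> length (hlog st')" for x using InvD(3)[OF I, of x] l by (simp add: st')
    show "\<exists>s n d. x = Wr s n d \<and> MWrite s n d \<in> messages st'" if "x \<in> set (hlog st')" for x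
      using I that by (auto simp: st' Inv_def)
    fix s2 n2 d2 assume "MWrite s2 n2 d2 \<in> messages st'"
    then have m2: "MWrite s2 n2 d2 \<in> messages st" by (simp add: st')
    note mi = InvD(5)[OF I m2]
    show "1 \<le> s2" "s2 \<le> active st'" "n2 \<le> sseq (sw st' s2)"
      "(\<exists>k. dirty (sw st' s2) d2 = Some k \<and> n2 \<le> k) \<or> wge (lastCommitted (sw st' s2)) (Wr s2 n2 d2)"
      using mi by (simp_all add: st')
  next
    fix s2 n2 d2 d3 assume "MWrite s2 n2 d2 \<in> messages st'" "MWrite s2 n2 d3 \<in> messages st'"
    then show "d2 = d3" using InvD(6)[OF I] by (simp add: st')
  next
    fix x show "lastCommitted (sw st' x) = Bot \<or> lastCommitted (sw st' x) \<in> set (CL st') \<and> switchNum (lastCommitted (sw st' x)) = x"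
      using InvD(7)[OF I, of x] sub by (auto simp: st')
  next
    fix w g assume "ReadResponse w g \<in> messages st'"
    then have "ReadResponse w g \<in> messages st" by (simp add: st')
    then show "wge w g" "w = Bot \<or> w \<in> set (CL st')" using InvD(8)[OF I] sub by blast+
  next
    fix d2 g assume "ProtocolRead d2 g \<in> messages st'"
    then have "ProtocolRead d2 g \<in> messages st" by (simp add: st')
    then show "gok st' d2 g" using InvD(9)[OF I] gok_mono[OF sub] by blast
  next
    fix d2 s2 lc g assume "HarmoniaRead d2 s2 lc g \<in> messages st'"
    then have h: "HarmoniaRead d2 s2 lc g \<in> messages st" by (simp add: st')
    note hh = InvD(10)[OF I h]
    show "gok st' d2 g" using hh gok_mono[OF sub] by blast
    show "lc \<in> set (CL st')" using hh sub by blast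
    show "wgt lc Bot" "switchNum lc = s2" "g = Bot \<or> wge lc g \<or> s2 < active st'"
      using hh by (simp_all add: st')
  qed
qed

lemma pres_Failover:
  assumes I: "Inv st" and st': "st' = st\<lparr> active := active st + 1 \<rparr>"
  shows "Inv st'"
proof -
  have cl: "CL st' = CL st" by (rule CL_cong) (simp_all add: st')
  have gk: "gok st' = gok st" unfolding gok_def cl by simp
  show ?thesis unfolding Inv_def cl gk
  proof (intro conjI allI impI ballI)
    show "finite (messages st')" using I by (simp add: st' Inv_def)
    show "sorted_wrt (\<lambda>a b. wge b a) (hlog st')" using I by (simp add: st' Inv_def)
    show "cp st' x \<le> length (hlog st')" for x using InvD(3)[OF I, of x] by (simp add: st')
    show "\<exists>s n d. x = Wr s n d \<and> MWrite s n d \<in> messages st'" if "x \<in> set (hlog st')" for x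
      using InvD(4)[OF I, of x] that by (simp add: st')
    fix s2 n2 d2 assume "MWrite s2 n2 d2 \<in> messages st'"
    then have m2: "MWrite s2 n2 d2 \<in> messages st" by (simp add: st')
    note mi = InvD(5)[OF I m2]
    show "1 \<le> s2" "s2 \<le> active st'" "n2 \<le> sseq (sw st' s2)"
      "(\<exists>k. dirty (sw st' s2) d2 = Some k \<and> n2 \<le> k) \<or> wge (lastCommitted (sw st' s2)) (Wr s2 n2 d2)"
      using mi by (simp_all add: st')
  next
    fix s2 n2 d2 d3 assume "MWrite s2 n2 d2 \<in> messages st'" "MWrite s2 n2 d3 \<in> messages st'"
    then show "d2 = d3" using InvD(6)[OF I] by (simp add: st')
  next
    fix x show "lastCommitted (sw st' x) = Bot \<or> lastCommitted (sw st' x) \<in> set (CL st) \<and> switchNum (lastCommitted (sw st' x)) = x"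
      using InvD(7)[OF I, of x] by (simp add: st')
  next
    fix w g assume "ReadResponse w g \<in> messages st'"
    then show "wge w g" "w = Bot \<or> w \<in> set (CL st)" using InvD(8)[OF I] by (simp_all add: st')
  next
    fix d2 g assume "ProtocolRead d2 g \<in> messages st'"
    then show "gok st d2 g" using InvD(9)[OF I] by (simp add: st')
  next
    fix d2 s2 lc g assume "HarmoniaRead d2 s2 lc g \<in> messages st'"
    then have h: "HarmoniaRead d2 s2 lc g \<in> messages st" by (simp add: st')
    show "gok st d2 g" "lc \<in> set (CL st)" "wgt lc Bot" "switchNum lc = s2"
      "g = Bot \<or> wge lc g \<or> s2 < active st'" using InvD(10)[OF I h] by (auto simp: st')
  qed
qed

lemma pres_step:
  assumes "Inv st" "step D N Rep rb mx st st'"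
  shows "Inv st'"
  using assms(2)
proof cases
  case (SendWrite s d n) then show ?thesis by (intro pres_SendWrite[OF assms(1), of s N n st' d]) auto
next
  case (HandleWrite s n d) then show ?thesis by (intro pres_HandleWrite[OF assms(1), of s n d]) auto
next
  case (ProcessWriteCompletion w s) then show ?thesis by (intro pres_PWC[OF assms(1), of w s]) auto
next
  case (CommitWrite r) then show ?thesis by (intro pres_Commit[OF assms(1), of r]) auto
next
  case (SendRead s d lr m)
  then have "msg_ok st m" by (intro ok_SendRead[OF assms(1), of lr d m s]) auto
  then show ?thesis using SendRead by (intro pres_newmsg[OF assms(1), of st' m]) auto
next
  case (HandleProtocolRead d g)
  then have "msg_ok st (ReadResponse (MCW mx Rep rb st d) g)" by (intro ok_HandleProtocolRead[OF assms(1)])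
  then show ?thesis using HandleProtocolRead by (intro pres_newmsg[OF assms(1), of st']) auto
next
  case (HandleHarmoniaRead r d s lc g c w)
  then have "msg_ok st (ReadResponse w g)" by (intro ok_HandleHarmoniaRead[OF assms(1), of r d s lc g c w]) auto
  then show ?thesis using HandleHarmoniaRead by (intro pres_newmsg[OF assms(1), of st']) auto
next
  case SwitchFailover then show ?thesis by (intro pres_Failover[OF assms(1)]) auto
qed

lemma reach_Inv: "reachable D N Rep rb mx st \<Longrightarrow> Inv st"
  by (induction rule: reachable.induct) (auto intro: Inv_init pres_step)


end


theorem theorem1:
  fixes D :: "'d set" and N :: nat and Rep :: "'r set" and isReadBehind :: bool
    and mx :: "'d wr set \<Rightarrow> 'd wr" and st :: "('d, 'r) hstate"
  assumes "finite D" and "N \<ge> 1" and "finite Rep" and "Rep \<noteq> {}"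
    and "is_max_choice mx"
    and "reachable D N Rep isReadBehind mx st"
  shows "Linearizability Rep isReadBehind st"
proof -
  interpret H Rep isReadBehind mx using assms by unfold_locales auto
  have I: "Inv st" using reach_Inv assms(6) by blast
  show ?thesis unfolding Linearizability_def using InvD(8)[OF I] by blast
qed

end
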